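(* For each positive integer $n$ let $K_n=\{\alpha_{0n},\alpha_{1n},\dots,\alpha_{nn}\}\subset[0,1]$ with $\alpha_{0n}\le\alpha_{1n}\le\cdots\le\alpha_{nn}$, and suppose $$\lim_{n\to\infty}\max_{p\in[0,1]}\sum_{k=0}^n\binom{n}{k}p^k(1-p)^{n-k}|p-\alpha_{kn}|=0.$$ Then the normalized counting measures $\delta_{K_n}=\frac{1}{n+1}\sum_{j=0}^n\delta_{\alpha_{jn}}$ converge weak$^*$ to Lebesgue measure $dx$ on $[0,1]$ as $n\to\infty$, i.e. $\lim_{n\to\infty}\int_0^1 g\,d\delta_{K_n}=\int_0^1 g(x)\,dx$ for every $g\in C[0,1]$.
   Context: $\delta_x$ denotes the unit point mass (Dirac measure) at $x$. *)

theory Defs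
  imports "HOL-Analysis.Analysis"
begin

end

theory Submission
  imports Defs
begin


lemma beta_nat:
  assumes "k \<le> n"
  shows "((\<lambda>t::real. t ^ k * (1 - t) ^ (n - k)) has_integral (fact k * fact (n-k) / fact (Suc n))) {0..1}"
proof -
  have B: "((\<lambda>t. t powr (real k + 1 - 1) * (1 - t) powr (real (n-k) + 1 - 1)) has_integral Beta (real k + 1) (real (n-k) + 1)) {0..1}"
    by (rule has_integral_Beta_real) auto
  have eq: "Beta (real k + 1) (real (n-k) + 1) = fact k * fact (n-k) / fact (Suc n)"
  proof -
    have "real k + 1 + (real (n - k) + 1) = 1 + real (Suc n)" using assms by simp
    then show ?thesis unfolding Beta_def
      by (metis Gamma_fact add.commute of_nat_add of_nat_1)
  qed
  have "((\<lambda>t::real. t ^ k * (1 - t) ^ (n - k)) has_integral Beta (real k + 1) (real (n-k) + 1)) {0<..<1}"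
    using B[unfolded has_integral_Icc_iff_Ioo]
    by (subst has_integral_cong[where g="\<lambda>t. t powr (real k + 1 - 1) * (1 - t) powr (real (n-k) + 1 - 1)"])
       (auto simp: powr_realpow)
  then show ?thesis using eq by (simp add: has_integral_Icc_iff_Ioo)
qed

lemma Bernstein_int:
  assumes "k \<le> n"
  shows "(Bernstein n k has_integral (1 / real (Suc n))) {0..1}"
proof -
  have "((\<lambda>t. real (n choose k) * (t ^ k * (1 - t) ^ (n - k))) has_integral
        real (n choose k) * (fact k * fact (n-k) / fact (Suc n))) {0..1}"
    by (rule has_integral_mult_right[OF beta_nat[OF assms]])
  moreover have "real (n choose k) * (fact k * fact (n-k) / fact (Suc n)) = 1 / real (Suc n)"
  proof -
    have "fact n + fact n * real n \<noteq> 0"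
    proof -
      have "(fact n :: real) > 0" by simp
      then have "fact n * (1 + real n) > 0" by (intro mult_pos_pos) auto
      then show ?thesis by (simp add: algebra_simps)
    qed
    then show ?thesis using assms by (simp add: binomial_fact field_simps)
  qed
  ultimately show ?thesis unfolding Bernstein_def by (simp add: mult.assoc)
qed

lemma key_bound:
  fixes g :: "real \<Rightarrow> real" and a :: "nat \<Rightarrow> real"
  assumes g: "continuous_on {0..1} g"
    and a: "\<And>k. k \<le> n \<Longrightarrow> a k \<in> {0..1}"
    and pt: "\<And>x y. x \<in> {0..1} \<Longrightarrow> y \<in> {0..1} \<Longrightarrow> \<bar>g x - g y\<bar> \<le> \<epsilon> + C * \<bar>y - x\<bar>"
    and eps: "\<epsilon> \<ge> 0" and C: "C \<ge> 0"
    and D: "\<And>p. p \<in> {0..1} \<Longrightarrow> (\<Sum>k\<le>n. real (n choose k) * p ^ k * (1 - p) ^ (n - k) * \<bar>p - a k\<bar>) \<le> D"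
  shows "\<bar>(1 / real (n + 1)) * (\<Sum>j\<le>n. g (a j)) - integral {0..1} g\<bar> \<le> \<epsilon> + C * D"
proof -
  define F where "F p = (\<Sum>k\<le>n. Bernstein n k p * (g (a k) - g p))" for p
  have Fe: "F p = (\<Sum>k\<le>n. Bernstein n k p * g (a k)) - g p" for p
  proof -
    have "F p = (\<Sum>k\<le>n. Bernstein n k p * g (a k)) - (\<Sum>k\<le>n. Bernstein n k p) * g p"
      unfolding F_def by (simp only: right_diff_distrib sum_subtractf sum_distrib_right)
    also have "(\<Sum>k\<le>n. Bernstein n k p) * g p = g p" by simp
    finally show ?thesis .
  qed
  have I1: "((\<lambda>p. \<Sum>k\<le>n. Bernstein n k p * g (a k)) has_integral (\<Sum>k\<le>n. 1 / real (Suc n) * g (a k))) {0..1}"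
    by (intro has_integral_sum finite_atMost has_integral_mult_left Bernstein_int) auto
  have I2: "(g has_integral integral {0..1} g) {0..1}"
    using g by (simp add: integrable_continuous_interval integrable_integral)
  have IF: "(F has_integral ((1 / real (n + 1)) * (\<Sum>j\<le>n. g (a j)) - integral {0..1} g)) {0..1}"
    unfolding Fe using has_integral_diff[OF I1 I2] by (simp add: sum_distrib_left)
  have D0: "0 \<le> D"
    using D[of 0] by (smt (verit) atLeastAtMost_iff sum_nonneg zero_le_mult_iff abs_ge_zero
          of_nat_0_le_iff zero_le_power)
  have bnd: "norm (F p) \<le> \<epsilon> + C * D" if p: "p \<in> cbox 0 1" for p
  proof -
    have p': "p \<in> {0..1}" using p by simp
    have "norm (F p) \<le> (\<Sum>k\<le>n. \<bar>Bernstein n k p * (g (a k) - g p)\<bar>)"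
      unfolding F_def real_norm_def by (rule sum_abs)
    also have "\<dots> \<le> (\<Sum>k\<le>n. Bernstein n k p * (\<epsilon> + C * \<bar>p - a k\<bar>))"
    proof (rule sum_mono)
      fix k assume "k \<in> {..n}"
      then have "\<bar>g (a k) - g p\<bar> \<le> \<epsilon> + C * \<bar>p - a k\<bar>" using pt a p' by auto
      moreover have "Bernstein n k p \<ge> 0" using p' by (auto intro: Bernstein_nonneg)
      ultimately show "\<bar>Bernstein n k p * (g (a k) - g p)\<bar> \<le> Bernstein n k p * (\<epsilon> + C * \<bar>p - a k\<bar>)"
        by (simp add: abs_mult mult_left_mono)
    qed
    also have "\<dots> = \<epsilon> * (\<Sum>k\<le>n. Bernstein n k p) + C * (\<Sum>k\<le>n. real (n choose k) * p ^ k * (1 - p) ^ (n - k) * \<bar>p - a k\<bar>)"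
      by (simp add: algebra_simps sum.distrib sum_distrib_left Bernstein_def)
    also have "\<dots> \<le> \<epsilon> + C * D"
      using D[OF p'] C by (simp add: mult_left_mono)
    finally show ?thesis .
  qed
  have "norm ((1 / real (n + 1)) * (\<Sum>j\<le>n. g (a j)) - integral {0..1} g) \<le> (\<epsilon> + C * D) * Henstock_Kurzweil_Integration.content (cbox (0::real) 1)"
    by (rule has_integral_bound[OF _ _ bnd]) (use IF eps C D0 in auto)
  then show ?thesis by simp
qed


theorem theorem3p4:
  fixes \<alpha> :: "nat \<Rightarrow> nat \<Rightarrow> real"
  assumes range: "\<And>n k. n \<ge> 1 \<Longrightarrow> k \<le> n \<Longrightarrow> \<alpha> n k \<in> {0..1}"
    and mono: "\<And>n j k. n \<ge> 1 \<Longrightarrow> j \<le> k \<Longrightarrow> k \<le> n \<Longrightarrow> \<alpha> n j \<le> \<alpha> n k"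
    and lim: "(\<lambda>n. Sup ((\<lambda>p. \<Sum>k\<le>n. real (n choose k) * p ^ k * (1 - p) ^ (n - k) * \<bar>p - \<alpha> n k\<bar>) ` {0..1}))
              \<longlonglongrightarrow> 0"
  shows "\<And>g. continuous_on {0..1} g \<Longrightarrow>
    (\<lambda>n. (1 / real (n + 1)) * (\<Sum>j\<le>n. g (\<alpha> n j) :: real)) \<longlonglongrightarrow> integral {0..1} g"
proof -
  fix g :: "real \<Rightarrow> real"
  assume g: "continuous_on {0..1} g"
  define S where "S n p = (\<Sum>k\<le>n. real (n choose k) * p ^ k * (1 - p) ^ (n - k) * \<bar>p - \<alpha> n k\<bar>)" for n p
  define D where "D n = Sup (S n ` {0..1})" for n
  have DS: "S n p \<le> D n" if "p \<in> {0..1}" for n p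
  proof -
    have "continuous_on {0..1} (S n)" unfolding S_def by (intro continuous_intros)
    then have "compact (S n ` {0..1})" by (intro compact_continuous_image) auto
    then have "bdd_above (S n ` {0..1})" by (intro bounded_imp_bdd_above compact_imp_bounded)
    then show ?thesis unfolding D_def using that by (intro cSup_upper) auto
  qed
  have limD: "D \<longlonglongrightarrow> 0" using lim unfolding D_def S_def .
  have "compact (g ` {0..1})" using g by (intro compact_continuous_image) auto
  then obtain M where M: "\<And>x. x \<in> {0..1} \<Longrightarrow> \<bar>g x\<bar> \<le> M"
  proof -
    from \<open>compact (g ` {0..1})\<close> have "bounded (g ` {0..1})" by (rule compact_imp_bounded)
    then obtain B where "\<forall>y\<in>g ` {0..1}. norm y \<le> B" unfolding bounded_pos by blast
    then show ?thesis using that[of B] by auto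
  qed
  have M0: "M \<ge> 0" using M[of 0] by auto
  have uc: "uniformly_continuous_on {0..1} g" using g by (intro compact_uniformly_continuous) auto
  show "(\<lambda>n. (1 / real (n + 1)) * (\<Sum>j\<le>n. g (\<alpha> n j))) \<longlonglongrightarrow> integral {0..1} g"
  proof (rule LIMSEQ_I)
    fix e :: real assume e: "e > 0"
    then obtain \<delta> where d: "\<delta> > 0"
      and dg: "\<And>x y. x \<in> {0..1} \<Longrightarrow> y \<in> {0..1} \<Longrightarrow> dist y x < \<delta> \<Longrightarrow> dist (g y) (g x) < e / 2"
      using uc unfolding uniformly_continuous_on_def by (meson half_gt_zero)
    define C where "C = 2 * M / \<delta>"
    have C0: "C \<ge> 0" using M0 d by (simp add: C_def)
    have pt: "\<bar>g x - g y\<bar> \<le> e / 2 + C * \<bar>y - x\<bar>" if xy: "x \<in> {0..1}" "y \<in> {0..1}" for x y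
    proof (cases "\<bar>y - x\<bar> < \<delta>")
      case True
      then have "\<bar>g x - g y\<bar> < e / 2" using dg[OF xy(2) xy(1)] by (simp add: dist_real_def abs_minus_commute)
      then show ?thesis using C0 by (smt (verit) abs_ge_zero mult_nonneg_nonneg)
    next
      case False
      have "\<bar>g x - g y\<bar> \<le> 2 * M" using M[OF xy(1)] M[OF xy(2)] by linarith
      also have "2 * M = C * \<delta>" using d by (simp add: C_def)
      also have "C * \<delta> \<le> C * \<bar>y - x\<bar>" using False C0 by (intro mult_left_mono) auto
      finally show ?thesis using e by linarith
    qed
    have "\<forall>\<^sub>F n in sequentially. norm (D n) < e / (2 * (C + 1))"
      using limD e C0 by (auto simp: tendsto_iff dist_real_def)
    then obtain N where N: "\<And>n. n \<ge> N \<Longrightarrow> \<bar>D n\<bar> < e / (2 * (C + 1))"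
      by (auto simp: eventually_sequentially)
    show "\<exists>N. \<forall>n\<ge>N. norm ((1 / real (n + 1)) * (\<Sum>j\<le>n. g (\<alpha> n j)) - integral {0..1} g) < e"
    proof (intro exI allI impI)
      fix n assume n: "n \<ge> max N 1"
      have b: "\<bar>(1 / real (n + 1)) * (\<Sum>j\<le>n. g (\<alpha> n j)) - integral {0..1} g\<bar> \<le> e / 2 + C * D n"
        by (rule key_bound[OF g _ pt _ C0]) (use range n e DS in \<open>auto simp: S_def\<close>)
      have "C * D n \<le> C * \<bar>D n\<bar>" using C0 by (intro mult_left_mono) auto
      also have "\<dots> \<le> C * (e / (2 * (C + 1)))" using N[of n] n C0 by (intro mult_left_mono) auto
      also have "\<dots> < e / 2"
      proof -
        have "C * (e / (2 * (C + 1))) = (e / 2) * (C / (C + 1))" using C0 by (simp add: field_simps)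
        also have "\<dots> < e / 2" using C0 e by (simp add: field_simps)
        finally show ?thesis .
      qed
      finally show "norm ((1 / real (n + 1)) * (\<Sum>j\<le>n. g (\<alpha> n j)) - integral {0..1} g) < e"
        using b by simp
    qed
  qed
qed

end
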